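(* For non-negative integers $l,m$ and sufficiently large odd primes $r$ define $$H_{l,m}(r)=\frac{\left(\frac{r-1}{2}\right)!}{\left(\frac{r-1}{2}-l+m\right)!}\,(-1)^{m+1}\,\sigma_m\!\left(1,2,\dots,\tfrac{r-1}{2}-l+m-1\right).$$ Then $H_{l,m}$ is a Fermat function, and its residue $g'_{l,m}$ lies in $\mathbb{Z}_{(m+2)}[\frac12]$.
   Context: $\sigma_j(x_1,\dots,x_k)$ is the $j$-th elementary symmetric polynomial, $\sigma_0=1$. $\mathbb{Z}_{(m)}=\mathbb{Z}[\frac12,\dots,\frac1{m-1}]$ for $m\ge3$ and $\mathbb{Z}_{(m)}=\mathbb{Z}$ for $m\le2$. A function $f$ assigning to each sufficiently large prime $r$ a rational number $f(r)$ lying in the $r$-adic integers is called a Fermat function if there is a rational number $\lambda$ with $f(r)\equiv \lambda\pmod r$ (i.e. same first $r$-adic digit) for all sufficiently large primes $r$; such $\lambda$ is unique and is called the residue of $f$. *)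

theory Defs
  imports Complex_Main "HOL-Computational_Algebra.Primes"
begin

definition r_integral :: "nat \<Rightarrow> rat \<Rightarrow> bool" where
  "r_integral r q \<longleftrightarrow> \<not> int r dvd snd (quotient_of q)"

text \<open>q and c are r-adic integers with the same first r-adic digit.\<close>
definition cong_rat :: "nat \<Rightarrow> rat \<Rightarrow> rat \<Rightarrow> bool" where
  "cong_rat r q c \<longleftrightarrow> r_integral r q \<and> r_integral r c \<and> int r dvd fst (quotient_of (q - c))"

definition has_fermat_residue :: "(nat \<Rightarrow> rat) \<Rightarrow> rat \<Rightarrow> bool" where
  "has_fermat_residue f c \<longleftrightarrow> (\<exists>N. \<forall>r. prime r \<and> r \<ge> N \<longrightarrow> cong_rat r (f r) c)"

definition fermat_function :: "(nat \<Rightarrow> rat) \<Rightarrow> bool" where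
  "fermat_function f \<longleftrightarrow> (\<exists>c. has_fermat_residue f c)"

definition fermat_residue :: "(nat \<Rightarrow> rat) \<Rightarrow> rat" where
  "fermat_residue f = (THE c. has_fermat_residue f c)"

definition esym :: "nat \<Rightarrow> nat \<Rightarrow> rat" where
  "esym j k = (\<Sum>S\<in>{S. S \<subseteq> {1..k} \<and> card S = j}. \<Prod>i\<in>S. of_nat i)"

text \<open>Z_(m) = Z[1/2,...,1/(m-1)] for m >= 3, Z for m <= 2, as a set of rationals.\<close>
definition Zloc :: "nat \<Rightarrow> rat set" where
  "Zloc m = (if m \<ge> 3
     then {q. \<forall>p::nat. prime p \<and> int p dvd snd (quotient_of q) \<longrightarrow> p < m}
     else {q. snd (quotient_of q) = 1})"

definition adjoin_half :: "rat set \<Rightarrow> rat set" where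
  "adjoin_half S = {x / 2 ^ k | x k. x \<in> S}"

definition H :: "nat \<Rightarrow> nat \<Rightarrow> nat \<Rightarrow> rat" where
  "H l m r = (let n = (r - 1) div 2; N = n + m - l in
     (fact n / fact N) * (-1) ^ (m + 1) * esym m (N - 1))"

end

theory Submission
  imports Defs "HOL-Number_Theory.Number_Theory"
begin


definition Zr :: "nat \<Rightarrow> rat set" where
  "Zr r = {q. \<exists>a b. b \<noteq> 0 \<and> \<not> int r dvd b \<and> q = of_int a / of_int b}"

definition cg :: "nat \<Rightarrow> rat \<Rightarrow> rat \<Rightarrow> bool" where
  "cg r x y \<longleftrightarrow> x \<in> Zr r \<and> y \<in> Zr r \<and> (x - y) / of_nat r \<in> Zr r"

context fixes r :: nat assumes pr: "prime r" begin

lemma Zr_of_int [simp]: "of_int a \<in> Zr r"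
  unfolding Zr_def using pr
  by (intro CollectI exI[of _ a] exI[of _ 1]) (auto simp: prime_gt_1_nat)

lemma Zr_of_nat [simp]: "of_nat a \<in> Zr r"
  using Zr_of_int[of "int a"] by simp

lemma Zr_0 [simp]: "0 \<in> Zr r" using Zr_of_int[of 0] by simp
lemma Zr_1 [simp]: "1 \<in> Zr r" using Zr_of_int[of 1] by simp
lemma Zr_numeral [simp]: "numeral k \<in> Zr r" using Zr_of_nat[of "numeral k"] by simp

lemma prr: "prime (int r)" using pr by simp

lemma Zr_add [simp,intro]: assumes "x \<in> Zr r" "y \<in> Zr r" shows "x + y \<in> Zr r"
proof -
  obtain a b c d where x: "b \<noteq> 0" "\<not> int r dvd b" "x = of_int a / of_int b"
    and y: "d \<noteq> 0" "\<not> int r dvd d" "y = of_int c / of_int d"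
    using assms unfolding Zr_def by blast
  have "x + y = of_int (a*d + c*b) / of_int (b*d)" using x y by (simp add: field_simps)
  moreover have "\<not> int r dvd b*d" using x y prr by (simp add: prime_dvd_mult_iff)
  ultimately show ?thesis unfolding Zr_def using x y by (intro CollectI exI[of _ "a*d+c*b"] exI[of _ "b*d"]) auto
qed

lemma Zr_mult [simp,intro]: assumes "x \<in> Zr r" "y \<in> Zr r" shows "x * y \<in> Zr r"
proof -
  obtain a b c d where x: "b \<noteq> 0" "\<not> int r dvd b" "x = of_int a / of_int b"
    and y: "d \<noteq> 0" "\<not> int r dvd d" "y = of_int c / of_int d"
    using assms unfolding Zr_def by blast
  have "x * y = of_int (a*c) / of_int (b*d)" using x y by (simp add: field_simps)
  moreover have "\<not> int r dvd b*d" using x y prr by (simp add: prime_dvd_mult_iff)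
  ultimately show ?thesis unfolding Zr_def using x y by (intro CollectI exI[of _ "a*c"] exI[of _ "b*d"]) auto
qed

lemma Zr_uminus [simp,intro]: assumes "x \<in> Zr r" shows "- x \<in> Zr r"
  using Zr_mult[OF Zr_of_int[of "-1"] assms] by simp

lemma Zr_diff [simp,intro]: assumes "x \<in> Zr r" "y \<in> Zr r" shows "x - y \<in> Zr r"
  using Zr_add[OF assms(1) Zr_uminus[OF assms(2)]] by simp

lemma Zr_inv_int: assumes "\<not> int r dvd b" shows "1 / of_int b \<in> Zr r"
  unfolding Zr_def using assms by (intro CollectI exI[of _ 1] exI[of _ b]) auto

lemma Zr_div_nat: assumes "x \<in> Zr r" "\<not> r dvd b" shows "x / of_nat b \<in> Zr r"
proof -
  have "\<not> int r dvd int b" using assms by simp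
  from Zr_mult[OF assms(1) Zr_inv_int[OF this]] show ?thesis by simp
qed

lemma Zr_sum [intro]: "(\<And>i. i \<in> A \<Longrightarrow> f i \<in> Zr r) \<Longrightarrow> sum f A \<in> Zr r"
  by (induction A rule: infinite_finite_induct) auto

lemma Zr_prod [intro]: "(\<And>i. i \<in> A \<Longrightarrow> f i \<in> Zr r) \<Longrightarrow> prod f A \<in> Zr r"
  by (induction A rule: infinite_finite_induct) auto

lemma Zr_power [intro]: "x \<in> Zr r \<Longrightarrow> x ^ k \<in> Zr r"
  by (induction k) auto

lemma r_integral_iff: "r_integral r q \<longleftrightarrow> q \<in> Zr r"
proof
  assume "r_integral r q"
  obtain n d where nd: "quotient_of q = (n, d)" by fastforce
  have "d > 0" "q = of_int n / of_int d" using nd quotient_of_denom_pos quotient_of_div by blast+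
  moreover have "\<not> int r dvd d" using \<open>r_integral r q\<close> nd unfolding r_integral_def by simp
  ultimately show "q \<in> Zr r" unfolding Zr_def by (intro CollectI exI[of _ n] exI[of _ d]) auto
next
  assume "q \<in> Zr r"
  then obtain a b where ab: "b \<noteq> 0" "\<not> int r dvd b" "q = of_int a / of_int b" unfolding Zr_def by blast
  obtain n d where nd: "quotient_of q = (n, d)" by fastforce
  have d: "d > 0" "coprime n d" "q = of_int n / of_int d"
    using nd quotient_of_denom_pos quotient_of_coprime quotient_of_div by blast+
  have "of_int n * of_int b = (of_int a * of_int d :: rat)" using ab d by (simp add: field_simps)
  hence "n * b = a * d" by (metis of_int_eq_iff of_int_mult)
  hence "d dvd n * b" by simp
  hence "d dvd b" using d(2) by (metis coprime_commute coprime_dvd_mult_right_iff)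
  hence "\<not> int r dvd d" using ab(2) dvd_trans by blast
  thus "r_integral r q" unfolding r_integral_def using nd by simp
qed

lemma num_dvd_iff: "int r dvd fst (quotient_of q) \<longleftrightarrow> q / of_nat r \<in> Zr r"
proof -
  obtain n d where nd: "quotient_of q = (n, d)" by fastforce
  have d: "d > 0" "coprime n d" "q = of_int n / of_int d"
    using nd quotient_of_denom_pos quotient_of_coprime quotient_of_div by blast+
  have r0: "r > 0" using pr prime_gt_0_nat by blast
  show ?thesis
  proof
    assume "int r dvd fst (quotient_of q)"
    then obtain k where "n = int r * k" using nd by auto
    hence "q / of_nat r = of_int k / of_int d" using d r0 by (simp add: field_simps)
    moreover have "\<not> int r dvd d"
    proof
      assume "int r dvd d"
      moreover have "int r dvd n" using \<open>n = int r * k\<close> by simp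
      ultimately have "is_unit (int r)" using d(2) coprime_common_divisor by blast
      with prr show False using not_prime_unit by blast
    qed
    ultimately show "q / of_nat r \<in> Zr r" unfolding Zr_def using d
      by (intro CollectI exI[of _ k] exI[of _ d]) auto
  next
    assume "q / of_nat r \<in> Zr r"
    then obtain a b where ab: "b \<noteq> 0" "\<not> int r dvd b" "q / of_nat r = of_int a / of_int b" unfolding Zr_def by blast
    have "q = of_nat r * of_int a / of_int b" using ab(3) r0 by (simp add: field_simps)
    hence "of_int n / of_int d = (of_int (int r * a) / of_int b :: rat)" using d(3) by simp
    hence "of_int n * of_int b = (of_int (int r * a) * of_int d :: rat)"
      using ab(1) d(1) by (simp add: frac_eq_eq)
    hence "n * b = int r * a * d" by (metis of_int_eq_iff of_int_mult)
    hence "int r dvd n * b" by simp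
    hence "int r dvd n" using ab(2) prr by (simp add: prime_dvd_mult_iff)
    thus "int r dvd fst (quotient_of q)" using nd by simp
  qed
qed


lemma cong_rat_iff: "cong_rat r q c \<longleftrightarrow> cg r q c"
  unfolding cong_rat_def cg_def using r_integral_iff num_dvd_iff by blast

lemma cg_refl: "x \<in> Zr r \<Longrightarrow> cg r x x"
  unfolding cg_def by simp

lemma cg_add: "cg r x y \<Longrightarrow> cg r x' y' \<Longrightarrow> cg r (x + x') (y + y')"
  unfolding cg_def
proof (elim conjE, intro conjI)
  assume "(x - y) / of_nat r \<in> Zr r" "(x' - y') / of_nat r \<in> Zr r"
  hence "(x - y) / of_nat r + (x' - y') / of_nat r \<in> Zr r" by blast
  moreover have "(x + x' - (y + y')) / of_nat r = (x - y) / of_nat r + (x' - y') / of_nat r"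
    by (metis add_divide_distrib add_diff_add)
  ultimately show "(x + x' - (y + y')) / of_nat r \<in> Zr r" by simp
qed auto

lemma cg_uminus: "cg r x y \<Longrightarrow> cg r (- x) (- y)"
  unfolding cg_def
proof (elim conjE, intro conjI)
  assume "(x - y) / of_nat r \<in> Zr r"
  hence "- ((x - y) / of_nat r) \<in> Zr r" by blast
  moreover have "(- x - - y) / of_nat r = - ((x - y) / of_nat r)"
    by (metis minus_diff_eq minus_diff_minus minus_divide_left)
  ultimately show "(- x - - y) / of_nat r \<in> Zr r" by simp
qed auto

lemma cg_diff: "cg r x y \<Longrightarrow> cg r x' y' \<Longrightarrow> cg r (x - x') (y - y')"
  using cg_add[of x y "-x'" "-y'"] cg_uminus[of x' y'] by simp

lemma cg_mult: "cg r x y \<Longrightarrow> cg r x' y' \<Longrightarrow> cg r (x * x') (y * y')"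
  unfolding cg_def
proof (elim conjE, intro conjI)
  assume a: "x \<in> Zr r" "y' \<in> Zr r" "(x - y) / of_nat r \<in> Zr r" "(x' - y') / of_nat r \<in> Zr r"
  hence "x * ((x' - y') / of_nat r) + ((x - y) / of_nat r) * y' \<in> Zr r" by blast
  thus "(x * x' - y * y') / of_nat r \<in> Zr r" by (simp add: field_simps add_divide_distrib diff_divide_distrib)
qed auto

lemma cg_sum: "(\<And>i. i \<in> A \<Longrightarrow> cg r (f i) (g i)) \<Longrightarrow> cg r (sum f A) (sum g A)"
  by (induction A rule: infinite_finite_induct) (auto intro: cg_add cg_refl)

lemma cg_prod: "(\<And>i. i \<in> A \<Longrightarrow> cg r (f i) (g i)) \<Longrightarrow> cg r (prod f A) (prod g A)"
  by (induction A rule: infinite_finite_induct) (auto intro: cg_mult cg_refl)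

lemma cg_div_nat: assumes "cg r x y" "\<not> r dvd b" shows "cg r (x / of_nat b) (y / of_nat b)"
  using assms unfolding cg_def
proof (elim conjE, intro conjI)
  assume "(x - y) / of_nat r \<in> Zr r"
  hence "(x - y) / of_nat r / of_nat b \<in> Zr r" using Zr_div_nat assms(2) by blast
  thus "(x / of_nat b - y / of_nat b) / of_nat r \<in> Zr r" by (simp add: field_simps diff_divide_distrib)
qed (auto intro: Zr_div_nat)

lemma cg_gchoose: assumes "cg r x y" "j < r" shows "cg r (x gchoose j) (y gchoose j)"
proof -
  have "\<not> r dvd fact j" using pr assms(2) by (simp add: prime_dvd_fact_iff)
  moreover have "cg r (\<Prod>i=0..<j. x - of_nat i) (\<Prod>i=0..<j. y - of_nat i)"
    by (rule cg_prod, rule cg_diff[OF assms(1) cg_refl]) simp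
  ultimately have "cg r ((\<Prod>i=0..<j. x - of_nat i) / of_nat (fact j)) ((\<Prod>i=0..<j. y - of_nat i) / of_nat (fact j))"
    using cg_div_nat by blast
  thus ?thesis by (simp add: gbinomial_prod_rev)
qed

end

lemma residue_unique:
  assumes "has_fermat_residue f c" "has_fermat_residue f c'"
  shows "c = c'"
proof (rule ccontr)
  assume ne: "c \<noteq> c'"
  obtain N where N: "\<forall>r. prime r \<and> r \<ge> N \<longrightarrow> cong_rat r (f r) c" using assms(1) unfolding has_fermat_residue_def by blast
  obtain N' where N': "\<forall>r. prime r \<and> r \<ge> N' \<longrightarrow> cong_rat r (f r) c'" using assms(2) unfolding has_fermat_residue_def by blast
  obtain n d where nd: "quotient_of (c' - c) = (n, d)" by fastforce
  have "n \<noteq> 0" using nd ne quotient_of_div by fastforce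
  obtain r where r: "prime r" "r > N + N' + nat \<bar>n\<bar>" using bigger_prime by blast
  have "cg r (f r) c" "cg r (f r) c'" using N N' r cong_rat_iff by auto
  hence "(f r - c) / of_nat r - (f r - c') / of_nat r \<in> Zr r" using r(1) Zr_diff unfolding cg_def by blast
  hence "(c' - c) / of_nat r \<in> Zr r" by (simp add: field_simps diff_divide_distrib)
  hence "int r dvd fst (quotient_of (c' - c))" using num_dvd_iff[OF r(1)] by blast
  hence "int r dvd n" using nd by simp
  hence "\<bar>int r\<bar> \<le> \<bar>n\<bar>" by (rule dvd_imp_le_int[OF \<open>n \<noteq> 0\<close>])
  hence "int r \<le> \<bar>n\<bar>" by simp
  thus False using r by linarith
qed




definition esymN :: "nat \<Rightarrow> nat set \<Rightarrow> nat" where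
  "esymN j A = (\<Sum>S\<in>{S. S \<subseteq> A \<and> card S = j}. \<Prod>S)"

lemma esym_esymN: "esym j k = of_nat (esymN j {1..k})"
  unfolding esym_def esymN_def by (simp add: of_nat_sum of_nat_prod)

lemma esymN_0: "finite A \<Longrightarrow> esymN 0 A = 1"
proof -
  assume "finite A"
  hence "{S. S \<subseteq> A \<and> card S = 0} = {{}}" using finite_subset by fastforce
  thus ?thesis unfolding esymN_def by simp
qed

lemma esymN_big: "finite A \<Longrightarrow> card A < j \<Longrightarrow> esymN j A = 0"
proof -
  assume "finite A" "card A < j"
  have E: "{S. S \<subseteq> A \<and> card S = j} = {}"
  proof (rule equals0I)
    fix S assume "S \<in> {S. S \<subseteq> A \<and> card S = j}"
    hence S: "S \<subseteq> A" "card S = j" by auto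
    have "card S \<le> card A" by (rule card_mono[OF \<open>finite A\<close> S(1)])
    thus False using S(2) \<open>card A < j\<close> by linarith
  qed
  show ?thesis unfolding esymN_def E by simp
qed

lemma esymN_insert:
  assumes "finite A" "x \<notin> A"
  shows "esymN (Suc j) (insert x A) = esymN (Suc j) A + x * esymN j A"
proof -
  let ?F = "\<lambda>j. {S. S \<subseteq> A \<and> card S = j}"
  have split: "{S. S \<subseteq> insert x A \<and> card S = Suc j} = ?F (Suc j) \<union> insert x ` ?F j"
  proof (intro equalityI subsetI)
    fix S assume S: "S \<in> {S. S \<subseteq> insert x A \<and> card S = Suc j}"
    show "S \<in> ?F (Suc j) \<union> insert x ` ?F j"
    proof (cases "x \<in> S")
      case True
      have "finite S" using S assms(1) finite_subset by auto
      hence "card (S - {x}) = j" using S True by auto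
      moreover have "S - {x} \<subseteq> A" using S by auto
      moreover have "S = insert x (S - {x})" using True by auto
      ultimately show ?thesis by blast
    next
      case False thus ?thesis using S by auto
    qed
  next
    fix S assume "S \<in> ?F (Suc j) \<union> insert x ` ?F j"
    thus "S \<in> {S. S \<subseteq> insert x A \<and> card S = Suc j}"
    proof
      assume "S \<in> ?F (Suc j)" thus ?thesis by auto
    next
      assume "S \<in> insert x ` ?F j"
      then obtain T where T: "T \<subseteq> A" "card T = j" "S = insert x T" by auto
      have "finite T" using T assms(1) finite_subset by auto
      moreover have "x \<notin> T" using T assms(2) by auto
      ultimately show ?thesis using T by auto
    qed
  qed
  have disj: "?F (Suc j) \<inter> insert x ` ?F j = {}" using assms(2) by auto
  have inj: "inj_on (insert x) (?F j)"
    by (rule inj_onI) (metis (no_types, lifting) assms(2) insert_ident mem_Collect_eq subsetD)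
  have fin: "finite (?F k)" for k using assms(1) by (auto intro: finite_subset[of _ "Pow A"])
  have "esymN (Suc j) (insert x A) = (\<Sum>S\<in>?F (Suc j). \<Prod>S) + (\<Sum>S\<in>insert x ` ?F j. \<Prod>S)"
    unfolding esymN_def split using disj fin by (intro sum.union_disjoint) auto
  also have "(\<Sum>S\<in>insert x ` ?F j. \<Prod>S) = (\<Sum>T\<in>?F j. \<Prod>(insert x T))"
    using inj by (simp add: sum.reindex)
  also have "\<dots> = (\<Sum>T\<in>?F j. x * \<Prod>T)"
  proof (rule sum.cong)
    fix T assume "T \<in> ?F j"
    hence "finite T" "x \<notin> T" using assms finite_subset by auto
    thus "\<Prod>(insert x T) = x * \<Prod>T" by simp
  qed simp
  finally show ?thesis unfolding esymN_def by (simp add: sum_distrib_left)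
qed

lemma esymN_Suc: "esymN (Suc j) {1..Suc K} = esymN (Suc j) {1..K} + Suc K * esymN j {1..K}"
proof -
  have "{1..Suc K} = insert (Suc K) {1..K}" by auto
  thus ?thesis using esymN_insert[of "{1..K}" "Suc K" j] by simp
qed

fun aa :: "nat \<Rightarrow> nat \<Rightarrow> nat" where
  "aa 0 k = (if k = 0 then 1 else 0)"
| "aa (Suc m) 0 = 0"
| "aa (Suc m) (Suc k) = k * (aa m (k - 1) + aa m k)"

lemma aa_big: "k > 2 * m \<Longrightarrow> aa m k = 0"
proof (induction m arbitrary: k)
  case 0 thus ?case by simp
next
  case (Suc m)
  thus ?case by (cases k) auto
qed

lemma aa_small: "k \<le> Suc m \<Longrightarrow> aa (Suc m) k = 0"
proof (induction m arbitrary: k)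
  case 0 thus ?case by (cases k) auto
next
  case (Suc m)
  thus ?case by (cases k) auto
qed

lemma binom_x_mult: "x * (x choose j) = Suc j * (x choose Suc j) + j * (x choose j)"
proof (cases x)
  case 0 thus ?thesis by (cases j) auto
next
  case (Suc y)
  have "Suc j * (x choose Suc j) = (x - j) * (x choose j)"
  proof (cases "j \<le> x")
    case True
    have "Suc j * (Suc y choose Suc j) = Suc y * (y choose j)" by (rule Suc_times_binomial)
    moreover have "(x - j) * (x choose j) = x * ((x - 1) choose j)" by (rule binomial_absorb_comp)
    ultimately show ?thesis using Suc by simp
  next
    case False thus ?thesis by simp
  qed
  moreover have "(x - j) * (x choose j) + j * (x choose j) = x * (x choose j)"
  proof (cases "j \<le> x")
    case True thus ?thesis by (simp add: add_mult_distrib[symmetric])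
  next
    case False thus ?thesis by simp
  qed
  ultimately show ?thesis by simp
qed

lemma aa_step:
  "(\<Sum>k\<le>Suc (Suc (2*m)). aa (Suc m) k * (Suc x choose k))
   = (\<Sum>k\<le>Suc (Suc (2*m)). aa (Suc m) k * (x choose k)) + x * (\<Sum>j\<le>2*m. aa m j * (x choose j))"
proof -
  let ?s = "Suc (2*m)"
  have "(\<Sum>k\<le>Suc ?s. aa (Suc m) k * (Suc x choose k))
      = (\<Sum>k\<le>?s. aa (Suc m) (Suc k) * (Suc x choose Suc k))"
    by (subst sum.atMost_Suc_shift) simp
  also have "\<dots> = (\<Sum>k\<le>?s. aa (Suc m) (Suc k) * (x choose k)) + (\<Sum>k\<le>?s. aa (Suc m) (Suc k) * (x choose Suc k))"
    by (simp add: add_mult_distrib2 sum.distrib)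
  also have "(\<Sum>k\<le>?s. aa (Suc m) (Suc k) * (x choose Suc k)) = (\<Sum>k\<le>Suc ?s. aa (Suc m) k * (x choose k))"
    by (subst (2) sum.atMost_Suc_shift) simp
  also have "(\<Sum>k\<le>?s. aa (Suc m) (Suc k) * (x choose k)) = x * (\<Sum>j\<le>2*m. aa m j * (x choose j))"
  proof -
    have "x * (\<Sum>j\<le>2*m. aa m j * (x choose j)) = (\<Sum>j\<le>2*m. aa m j * (x * (x choose j)))"
      by (simp add: sum_distrib_left mult.assoc mult.left_commute)
    also have "\<dots> = (\<Sum>j\<le>2*m. aa m j * (Suc j * (x choose Suc j))) + (\<Sum>j\<le>2*m. aa m j * (j * (x choose j)))"
      by (simp add: binom_x_mult add_mult_distrib2 sum.distrib)
    also have "(\<Sum>j\<le>2*m. aa m j * (Suc j * (x choose Suc j))) = (\<Sum>k\<le>?s. k * aa m (k - 1) * (x choose k))"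
    proof -
      have "(\<Sum>k\<le>?s. k * aa m (k - 1) * (x choose k)) = (\<Sum>j\<le>2*m. Suc j * aa m (Suc j - 1) * (x choose Suc j))"
        by (subst sum.atMost_Suc_shift) simp
      also have "\<dots> = (\<Sum>j\<le>2*m. aa m j * (Suc j * (x choose Suc j)))"
        by (rule sum.cong) (auto simp: algebra_simps)
      finally show ?thesis by simp
    qed
    also have "(\<Sum>j\<le>2*m. aa m j * (j * (x choose j))) = (\<Sum>k\<le>?s. k * aa m k * (x choose k))"
      using aa_big[of m "Suc (2*m)"] by (simp add: mult_ac)
    also have "(\<Sum>k\<le>?s. k * aa m (k - 1) * (x choose k)) + (\<Sum>k\<le>?s. k * aa m k * (x choose k))
        = (\<Sum>k\<le>?s. aa (Suc m) (Suc k) * (x choose k))"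
      by (simp add: sum.distrib[symmetric] algebra_simps)
    finally show ?thesis by simp
  qed
  finally show ?thesis by simp
qed

lemma esymN_expand: "esymN m {1..K} = (\<Sum>k\<le>2*m. aa m k * (Suc K choose k))"
proof (induction m arbitrary: K)
  case 0 thus ?case by (simp add: esymN_0)
next
  case (Suc m)
  show ?case
  proof (induction K)
    case 0
    have "esymN (Suc m) {1..0} = 0" by (rule esymN_big) auto
    moreover have "aa (Suc m) k * (Suc 0 choose k) = 0" for k
      by (cases "k \<le> 1") (auto simp: aa_small)
    ultimately show ?case by (simp only: sum.neutral_const)
  next
    case (Suc K)
    have "esymN (Suc m) {1..Suc K} = esymN (Suc m) {1..K} + Suc K * esymN m {1..K}"
      by (rule esymN_Suc)
    also have "\<dots> = (\<Sum>k\<le>Suc (Suc (2*m)). aa (Suc m) k * (Suc K choose k)) + Suc K * (\<Sum>j\<le>2*m. aa m j * (Suc K choose j))"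
      using Suc.IH Suc.prems \<open>\<And>K. esymN m {1..K} = _\<close> by simp
    also have "\<dots> = (\<Sum>k\<le>Suc (Suc (2*m)). aa (Suc m) k * (Suc (Suc K) choose k))"
      by (rule aa_step[symmetric])
    finally show ?case by simp
  qed
qed




declare binomial_Suc_Suc [simp del]

lemma esymN_prime_dvd:
  assumes p: "prime p" and j: "0 < j" "j \<le> p - 2"
  shows "p dvd esymN j {1..p-1}"
proof (rule ccontr)
  assume nd: "\<not> p dvd esymN j {1..p-1}"
  obtain g where g: "residue_primroot p g" using prime_primitive_root_exists[of p] p prime_gt_1_nat[OF p] by blast
  have p1: "p > 1" using p prime_gt_1_nat by blast
  have ordg: "ord p g = p - 1" and cop: "coprime p g"
    using g p by (auto simp: residue_primroot_def totient_prime)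
  define A where "A = {1..p-1}"
  define phi where "phi t = g * t mod p" for t
  have phiA: "phi t \<in> A" if "t \<in> A" for t
  proof -
    have "\<not> p dvd t" using that p1 unfolding A_def by (auto dest: dvd_imp_le)
    moreover have "\<not> p dvd g" using cop p1 by (metis coprime_absorb_left nat_dvd_1_iff_1 less_irrefl)
    ultimately have "\<not> p dvd g * t" using p by (simp add: prime_dvd_mult_iff)
    hence "phi t \<noteq> 0" unfolding phi_def by (simp add: dvd_eq_mod_eq_0)
    moreover have "phi t < p" unfolding phi_def using p1 by simp
    ultimately show ?thesis unfolding A_def by auto
  qed
  have inj: "inj_on phi A"
  proof (rule inj_onI)
    fix s t assume st: "s \<in> A" "t \<in> A" "phi s = phi t"
    hence "[g * s = g * t] (mod p)" unfolding phi_def cong_def by simp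
    hence "[s = t] (mod p)" using cop by (simp add: cong_mult_lcancel_nat coprime_commute)
    thus "s = t" using st(1,2) unfolding A_def cong_def by auto
  qed
  define F where "F = {S. S \<subseteq> A \<and> card S = j}"
  have finF: "finite F" unfolding F_def A_def by (auto intro: finite_subset[of _ "Pow {1..p-1}"])
  have injF: "inj_on (image phi) F"
    using inj_on_image_Pow[OF inj] by (rule inj_on_subset) (auto simp: F_def)
  have subF: "image phi ` F \<subseteq> F"
  proof
    fix S' assume "S' \<in> image phi ` F"
    then obtain S where S: "S \<in> F" "S' = phi ` S" by auto
    have "inj_on phi S" using inj S(1) unfolding F_def by (auto intro: inj_on_subset)
    hence "card S' = j" using S unfolding F_def by (simp add: card_image)
    moreover have "S' \<subseteq> A" using S phiA unfolding F_def by auto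
    ultimately show "S' \<in> F" unfolding F_def by auto
  qed
  have eqF: "image phi ` F = F"
    using card_subset_eq[OF finF subF] card_image[OF injF] by simp
  have e1: "esymN j A = (\<Sum>S\<in>F. \<Prod>t\<in>S. phi t)"
  proof -
    have "esymN j A = (\<Sum>S'\<in>image phi ` F. \<Prod>S')" unfolding eqF unfolding esymN_def F_def by simp
    also have "\<dots> = (\<Sum>S\<in>F. \<Prod>(phi ` S))" using injF by (simp add: sum.reindex)
    also have "\<dots> = (\<Sum>S\<in>F. \<Prod>t\<in>S. phi t)"
    proof (rule sum.cong)
      fix S assume "S \<in> F"
      hence "inj_on phi S" using inj unfolding F_def by (auto intro: inj_on_subset)
      thus "\<Prod>(phi ` S) = (\<Prod>t\<in>S. phi t)" by (simp add: prod.reindex)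
    qed simp
    finally show ?thesis .
  qed
  have "[(\<Sum>S\<in>F. \<Prod>t\<in>S. phi t) = (\<Sum>S\<in>F. \<Prod>t\<in>S. g * t)] (mod p)"
    by (intro cong_sum cong_prod) (simp add: phi_def cong_def)
  moreover have "(\<Sum>S\<in>F. \<Prod>t\<in>S. g * t) = g ^ j * esymN j A"
  proof -
    have "(\<Sum>S\<in>F. \<Prod>t\<in>S. g * t) = (\<Sum>S\<in>F. g ^ j * \<Prod>S)"
    proof (rule sum.cong)
      fix S assume "S \<in> F"
      thus "(\<Prod>t\<in>S. g * t) = g ^ j * \<Prod>S" unfolding F_def by (simp add: prod.distrib)
    qed simp
    thus ?thesis unfolding esymN_def F_def by (simp add: sum_distrib_left)
  qed
  ultimately have "[1 * esymN j A = g ^ j * esymN j A] (mod p)" using e1 by simp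
  moreover have "coprime (esymN j A) p" using nd p unfolding A_def
    by (simp add: prime_imp_coprime coprime_commute)
  ultimately have "[1 = g ^ j] (mod p)" using cong_mult_rcancel_nat by blast
  hence "[g ^ j = 1] (mod p)" by (simp add: cong_sym_eq)
  moreover have "j < ord p g" using ordg j p1 by linarith
  ultimately show False using ord_minimal[of j p g] j by blast
qed

lemma esymN_prime_dvd2:
  assumes p: "prime p"
  shows "p - 1 + d = M \<Longrightarrow> d < j \<Longrightarrow> j \<le> p - 2 \<Longrightarrow> p dvd esymN j {1..M}"
proof (induction d arbitrary: j M)
  case 0 thus ?case using esymN_prime_dvd[OF p, of j] by simp
next
  case (Suc d)
  obtain j' where j': "j = Suc j'" using Suc.prems(2) by (cases j) auto
  obtain M' where M': "M = Suc M'" "p - 1 + d = M'" using Suc.prems(1) by auto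
  have "esymN j {1..M} = esymN j {1..M'} + Suc M' * esymN j' {1..M'}"
    using esymN_Suc[of j' M'] j' M' by simp
  moreover have "p dvd esymN j {1..M'}" using Suc.IH[of M' j] M' Suc.prems by simp
  moreover have "p dvd esymN j' {1..M'}" using Suc.IH[of M' j'] M' Suc.prems j' by simp
  ultimately show ?case by simp
qed

lemma fact_split_prime:
  assumes p: "prime p" and "p \<le> n" "n < 2 * p"
  shows "\<exists>u. fact n = p * u \<and> \<not> p dvd u"
proof -
  have p1: "p > 1" using p prime_gt_1_nat by blast
  have "fact n = (fact p :: nat) * \<Prod>{Suc p..n}" using fact_eq_fact_times[OF assms(2)] by simp
  also have "(fact p :: nat) = p * fact (p - 1)" using p1 by (cases p) auto
  finally have eq: "fact n = p * (fact (p - 1) * \<Prod>{Suc p..n})" by simp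
  have "\<not> p dvd fact (p - 1)" using p p1 by (simp add: prime_dvd_fact_iff)
  moreover have "\<not> p dvd \<Prod>{Suc p..n}"
  proof
    assume "p dvd \<Prod>{Suc p..n}"
    then obtain t where t: "t \<in> {Suc p..n}" "p dvd t" using p by (auto simp: prime_dvd_prod_iff)
    then obtain c where c: "t = p * c" by blast
    have "c \<noteq> 0" using t c by (cases "c = 0") auto
    moreover have "c \<noteq> 1" using t c by (cases "c = 1") auto
    ultimately have "c \<ge> 2" by linarith
    hence "t \<ge> p * 2" using c by simp
    thus False using t assms(3) by auto
  qed
  ultimately have "\<not> p dvd fact (p - 1) * \<Prod>{Suc p..n}" using p by (simp add: prime_dvd_mult_iff)
  thus ?thesis using eq by blast
qed

definition cc :: "nat \<Rightarrow> nat \<Rightarrow> rat" where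
  "cc m j = of_nat (aa m (Suc m + j)) / of_nat ((Suc m + j) choose Suc m)"

lemma sum_shift_lemma:
  fixes f :: "nat \<Rightarrow> 'a::comm_monoid_add"
  assumes "\<And>k. k \<le> m \<Longrightarrow> f k = 0"
  shows "(\<Sum>k\<le>2*m. f k) = (\<Sum>j<m. f (Suc m + j))"
proof -
  have set: "{..2*m} = {..m} \<union> (\<lambda>j. Suc m + j) ` {..<m}"
  proof (intro equalityI subsetI)
    fix k assume k: "k \<in> {..2*m}"
    show "k \<in> {..m} \<union> (\<lambda>j. Suc m + j) ` {..<m}"
    proof (cases "k \<le> m")
      case False
      hence "k = Suc m + (k - Suc m)" "k - Suc m < m" using k by auto
      thus ?thesis by blast
    qed simp
  qed auto
  have "(\<Sum>k\<le>2*m. f k) = (\<Sum>k\<le>m. f k) + (\<Sum>k\<in>(\<lambda>j. Suc m + j) ` {..<m}. f k)"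
    unfolding set by (rule sum.union_disjoint) auto
  also have "(\<Sum>k\<le>m. f k) = 0" using assms by simp
  also have "(\<Sum>k\<in>(\<lambda>j. Suc m + j) ` {..<m}. f k) = (\<Sum>j<m. f (Suc m + j))"
    by (subst sum.reindex) (auto simp: inj_on_def)
  finally show ?thesis by simp
qed

lemma T_expand:
  assumes "1 \<le> m" "Suc m \<le> x"
  shows "(of_nat (esymN m {1..x-1}) :: rat) = of_nat (x choose Suc m) * (\<Sum>j<m. cc m j * of_nat ((x - Suc m) choose j))"
proof -
  have "esymN m {1..x-1} = (\<Sum>k\<le>2*m. aa m k * (x choose k))"
    using esymN_expand[of m "x - 1"] assms by simp
  also have "\<dots> = (\<Sum>j<m. aa m (Suc m + j) * (x choose (Suc m + j)))"
  proof (rule sum_shift_lemma)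
    fix k assume "k \<le> m"
    thus "aa m k * (x choose k) = 0" using assms(1) aa_small[of k "m - 1"] by simp
  qed
  finally have "(of_nat (esymN m {1..x-1}) :: rat) = (\<Sum>j<m. of_nat (aa m (Suc m + j)) * of_nat (x choose (Suc m + j)))"
    by simp
  also have "\<dots> = (\<Sum>j<m. of_nat (x choose Suc m) * (cc m j * of_nat ((x - Suc m) choose j)))"
  proof (rule sum.cong)
    fix j assume "j \<in> {..<m}"
    have ne: "((Suc m + j) choose Suc m) \<noteq> 0" by simp
    have key: "(x choose (Suc m + j)) * ((Suc m + j) choose Suc m) = (x choose Suc m) * ((x - Suc m) choose j)"
    proof (cases "Suc m + j \<le> x")
      case True thus ?thesis using choose_mult[of "Suc m" "Suc m + j" x] by simp
    next
      case False
      have "x choose (Suc m + j) = 0" by (rule binomial_eq_0) (use False in linarith)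
      moreover have "(x choose Suc m) * ((x - Suc m) choose j) = 0"
      proof (cases "x < Suc m")
        case True thus ?thesis by (simp add: binomial_eq_0)
      next
        case False
        have "(x - Suc m) choose j = 0" by (rule binomial_eq_0) (use False \<open>\<not> Suc m + j \<le> x\<close> in linarith)
        thus ?thesis by simp
      qed
      ultimately show ?thesis by (metis mult_zero_left)
    qed
    hence "(of_nat (x choose (Suc m + j)) :: rat) = of_nat (x choose Suc m) * of_nat ((x - Suc m) choose j) / of_nat ((Suc m + j) choose Suc m)"
      using ne by (simp add: field_simps flip: of_nat_mult)
    thus "of_nat (aa m (Suc m + j)) * (of_nat (x choose (Suc m + j)) :: rat) = of_nat (x choose Suc m) * (cc m j * of_nat ((x - Suc m) choose j))"
      unfolding cc_def by (simp add: field_simps)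
  qed simp
  finally show ?thesis by (simp add: sum_distrib_left)
qed

lemma Rv_eq:
  assumes "1 \<le> m" "i < m"
  shows "(of_nat (esymN m {1..i+m}) :: rat) / of_nat ((i + Suc m) choose Suc m) = (\<Sum>j<m. cc m j * of_nat (i choose j))"
proof -
  have "(of_nat (esymN m {1..i+m}) :: rat) = of_nat ((i + Suc m) choose Suc m) * (\<Sum>j<m. cc m j * of_nat (i choose j))"
    using T_expand[of m "i + Suc m"] assms by simp
  moreover have "((i + Suc m) choose Suc m) \<noteq> 0" by simp
  ultimately show ?thesis by simp
qed

lemma Rv_Zr:
  assumes m: "1 \<le> m" "i < m" and p: "prime p" "Suc (Suc m) \<le> p"
  shows "(of_nat (esymN m {1..i+m}) :: rat) / of_nat ((i + Suc m) choose Suc m) \<in> Zr p"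
proof -
  let ?e = "esymN m {1..i+m}"
  let ?n = "i + Suc m"
  have fl: "fact (Suc m) * fact i * (?n choose Suc m) = (fact ?n :: nat)"
    using binomial_fact_lemma[of "Suc m" ?n] by simp
  have nz: "fact (Suc m) * fact i > (0::nat)" by simp
  have "(0::rat) < of_nat (fact (Suc m) * fact i)" using nz by (rule of_nat_0_less_iff[THEN iffD2])
  hence fnz: "(of_nat (fact (Suc m) * fact i) :: rat) \<noteq> 0" by linarith
  have "(of_nat ?e :: rat) / of_nat (?n choose Suc m) = of_nat ?e * of_nat (fact (Suc m) * fact i) / (of_nat (fact (Suc m) * fact i) * of_nat (?n choose Suc m))"
    using fnz by simp
  also have "(of_nat (fact (Suc m) * fact i) :: rat) * of_nat (?n choose Suc m) = of_nat (fact ?n)"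
    using fl by (metis of_nat_mult)
  finally have eq: "(of_nat ?e :: rat) / of_nat (?n choose Suc m) = of_nat (?e * fact (Suc m) * fact i) / of_nat (fact ?n)"
    by (simp add: mult.assoc)
  show ?thesis
  proof (cases "p \<le> ?n")
    case False
    hence "\<not> p dvd fact ?n" using prime_dvd_fact_iff[OF p(1), of ?n] by blast
    thus ?thesis unfolding eq using Zr_div_nat[OF p(1)] Zr_of_nat[OF p(1)] by blast
  next
    case True
    obtain u where u: "fact ?n = p * u" "\<not> p dvd u"
      using fact_split_prime[OF p(1) True] m p by auto
    have "p dvd ?e"
      by (rule esymN_prime_dvd2[OF p(1), of "i + m - (p - 1)"]) (use True m p in auto)
    then obtain w where w: "?e = p * w" by blast
    have p0: "p \<noteq> 0" using p by auto
    have eq2: "(of_nat (?e * fact (Suc m) * fact i) :: rat) / of_nat (fact ?n) = of_nat (w * fact (Suc m) * fact i) / of_nat u"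
    proof -
      have "?e * fact (Suc m) * fact i = p * (w * fact (Suc m) * fact i)" using w by simp
      hence "(of_nat (?e * fact (Suc m) * fact i) :: rat) / of_nat (fact ?n)
           = (of_nat p * of_nat (w * fact (Suc m) * fact i)) / (of_nat p * of_nat u)"
        using u(1) by (metis of_nat_mult)
      also have "\<dots> = of_nat (w * fact (Suc m) * fact i) / of_nat u"
        using p0 by (intro mult_divide_mult_cancel_left) simp
      finally show ?thesis .
    qed
    show ?thesis unfolding eq eq2 by (rule Zr_div_nat[OF p(1) Zr_of_nat[OF p(1)] u(2)])
  qed
qed

lemma cc_Zr:
  assumes m: "1 \<le> m" and p: "prime p" "Suc (Suc m) \<le> p"
  shows "cc m j \<in> Zr p"
proof (induction j rule: less_induct)
  case (less j)
  show ?case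
  proof (cases "j < m")
    case False
    hence "aa m (Suc m + j) = 0" by (intro aa_big) simp
    hence "cc m j = 0" unfolding cc_def by simp
    thus ?thesis using Zr_0[OF p(1)] by simp
  next
    case True
    have "(\<Sum>i<m. cc m i * of_nat (j choose i)) = (\<Sum>i<Suc j. cc m i * of_nat (j choose i))"
    proof (rule sum.mono_neutral_right)
      show "{..<Suc j} \<subseteq> {..<m}" using True by auto
    next
      show "\<forall>i\<in>{..<m} - {..<Suc j}. cc m i * of_nat (j choose i) = 0"
        by (auto simp: binomial_eq_0)
    qed simp
    also have "\<dots> = (\<Sum>i<j. cc m i * of_nat (j choose i)) + cc m j" by simp
    finally have eq: "cc m j = (of_nat (esymN m {1..j+m}) :: rat) / of_nat ((j + Suc m) choose Suc m) - (\<Sum>i<j. cc m i * of_nat (j choose i))"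
      using Rv_eq[OF m True] by simp
    have "(\<Sum>i<j. cc m i * of_nat (j choose i)) \<in> Zr p"
    proof (rule Zr_sum[OF p(1)])
      fix i assume "i \<in> {..<j}"
      hence "cc m i \<in> Zr p" using less.IH by simp
      thus "cc m i * of_nat (j choose i) \<in> Zr p" using Zr_mult[OF p(1)] Zr_of_nat[OF p(1)] by blast
    qed
    thus ?thesis unfolding eq using Rv_Zr[OF m True p] Zr_diff[OF p(1)] by blast
  qed
qed




lemma fact_prod_rat: "l \<le> n \<Longrightarrow> (fact n :: rat) = fact (n - l) * (\<Prod>i<l. of_nat n - of_nat i)"
proof (induction l)
  case 0 show ?case by simp
next
  case (Suc l)
  have IH: "(fact n :: rat) = fact (n - l) * (\<Prod>i<l. of_nat n - of_nat i)"
    using Suc.IH Suc.prems by linarith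
  have nl: "n - l = Suc (n - Suc l)" using Suc.prems by linarith
  have f: "(fact (n - l) :: rat) = fact (n - Suc l) * (of_nat n - of_nat l)"
  proof -
    have "(fact (n - l) :: rat) = of_nat (Suc (n - Suc l)) * fact (n - Suc l)" unfolding nl by (rule fact_Suc)
    moreover have "(of_nat (Suc (n - Suc l)) :: rat) = of_nat n - of_nat l"
      using Suc.prems by (simp add: of_nat_diff)
    ultimately show ?thesis by (simp only: mult.commute)
  qed
  have pe: "(\<Prod>i<Suc l. (of_nat n :: rat) - of_nat i) = (\<Prod>i<l. of_nat n - of_nat i) * (of_nat n - of_nat l)"
    by (rule prod.lessThan_Suc)
  show ?case unfolding pe IH f by (simp only: mult_ac)
qed

definition Phi :: "nat \<Rightarrow> nat \<Rightarrow> rat \<Rightarrow> rat" where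
  "Phi l m x = (((-1) ^ (m + 1) * (\<Prod>i<Suc l. x - of_nat i)) *
      (\<Sum>j<m. cc m j * ((x - of_nat l - 1) gchoose j))) / of_nat (fact (Suc m))"

definition Phi0 :: "nat \<Rightarrow> rat \<Rightarrow> rat" where
  "Phi0 l x = - (\<Prod>i<l. x - of_nat i)"

lemma H_eq:
  assumes m: "1 \<le> m" and n: "n = (r - 1) div 2" "Suc l \<le> n"
  shows "H l m r = Phi l m (of_nat n)"
proof -
  define N where "N = n + m - l"
  have N: "Suc m \<le> N" "N - Suc m = n - Suc l" using n unfolding N_def by auto
  have H: "H l m r = fact n / fact N * (-1) ^ (m + 1) * esym m (N - 1)"
    unfolding H_def N_def n(1) Let_def by simp
  define S where "S = (\<Sum>j<m. cc m j * of_nat ((n - Suc l) choose j))"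
  have e: "esym m (N - 1) = of_nat (N choose Suc m) * S"
    unfolding esym_esymN S_def using T_expand[OF m N(1)] N(2) by simp
  define P where "P = (\<Prod>i<Suc l. (of_nat n :: rat) - of_nat i)"
  have fn: "(fact n :: rat) = fact (n - Suc l) * P" unfolding P_def using fact_prod_rat[of "Suc l" n] n by simp
  have "(fact n :: rat) / fact N * of_nat (N choose Suc m) = fact n / (fact (Suc m) * fact (n - Suc l))"
    using N by (simp add: binomial_fact)
  also have "\<dots> = P / fact (Suc m)" unfolding fn by simp
  finally have k: "(fact n :: rat) / fact N * of_nat (N choose Suc m) = P / fact (Suc m)" .
  have g: "(of_nat ((n - Suc l) choose j) :: rat) = (of_nat n - of_nat l - 1) gchoose j" for j
  proof -
    have "(of_nat (n - Suc l) :: rat) = of_nat n - of_nat l - 1" using n(2) by (simp add: of_nat_diff)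
    thus ?thesis by (simp add: binomial_gbinomial)
  qed
  have "H l m r = ((fact n :: rat) / fact N * of_nat (N choose Suc m)) * (-1) ^ (m + 1) * S"
    unfolding H e by (simp add: mult_ac)
  also have "\<dots> = P / fact (Suc m) * (-1) ^ (m + 1) * S" unfolding k ..
  also have "\<dots> = ((-1) ^ (m + 1) * P * S) / fact (Suc m)" by simp
  also have "\<dots> = Phi l m (of_nat n)"
  proof -
    have "S = (\<Sum>j<m. cc m j * ((of_nat n - of_nat l - 1) gchoose j))" unfolding S_def g ..
    thus ?thesis unfolding Phi_def P_def of_nat_fact by simp
  qed
  finally show ?thesis .
qed

lemma H0_eq:
  assumes n: "n = (r - 1) div 2" "l \<le> n"
  shows "H l 0 r = Phi0 l (of_nat n)"
proof -
  have H: "H l 0 r = fact n / fact (n - l) * (-1) * esym 0 (n - l - 1)"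
    unfolding H_def n(1) Let_def by simp
  have "esym 0 (n - l - 1) = 1" unfolding esym_esymN by (simp add: esymN_0)
  moreover have "(fact n :: rat) / fact (n - l) = (\<Prod>i<l. of_nat n - of_nat i)"
    using fact_prod_rat[OF n(2)] by simp
  ultimately show ?thesis unfolding H Phi0_def by simp
qed

context fixes r n :: nat assumes pr: "prime r" and rn: "r = 2 * n + 1"
begin

lemma half_cg: "cg r (of_nat n) (-1/2)"
proof -
  have r2: "\<not> int r dvd 2"
  proof
    assume "int r dvd 2"
    hence "r dvd 2" by presburger
    hence "r \<le> 2" by (auto dest: dvd_imp_le)
    moreover have "r \<noteq> 2" using rn by presburger
    ultimately have "r \<le> 1" by linarith
    thus False using prime_gt_1_nat[OF pr] by linarith
  qed
  have h: "-1/2 \<in> Zr r" using Zr_uminus[OF pr Zr_inv_int[OF pr r2]] by simp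
  have eq: "(of_nat n - (-1/2)) / of_nat r = (1/2 :: rat)" unfolding rn by (simp add: field_simps)
  have hh: "(1/2 :: rat) \<in> Zr r" using Zr_inv_int[OF pr r2] by simp
  show ?thesis unfolding cg_def eq using h hh Zr_of_nat[OF pr] by blast
qed

lemma Phi_cg:
  assumes "Suc (Suc m) \<le> r" "1 \<le> m"
  shows "cg r (Phi l m (of_nat n)) (Phi l m (-1/2))"
proof -
  note x = half_cg
  have c1: "cg r ((-1) ^ (m + 1) * (\<Prod>i<Suc l. of_nat n - of_nat i)) ((-1) ^ (m + 1) * (\<Prod>i<Suc l. -1/2 - of_nat i))"
  proof (rule cg_mult[OF pr])
    show "cg r ((-1) ^ (m + 1)) ((-1) ^ (m + 1))"
      by (rule cg_refl[OF pr], rule Zr_power[OF pr], rule Zr_uminus[OF pr], rule Zr_1[OF pr])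
    show "cg r (\<Prod>i<Suc l. of_nat n - of_nat i) (\<Prod>i<Suc l. -1/2 - of_nat i)"
      by (rule cg_prod[OF pr], rule cg_diff[OF pr x], rule cg_refl[OF pr], rule Zr_of_nat[OF pr])
  qed
  have c2: "cg r (\<Sum>j<m. cc m j * ((of_nat n - of_nat l - 1) gchoose j)) (\<Sum>j<m. cc m j * ((-1/2 - of_nat l - 1) gchoose j))"
  proof (rule cg_sum[OF pr], rule cg_mult[OF pr])
    fix j assume j: "j \<in> {..<m}"
    show "cg r (cc m j) (cc m j)" by (rule cg_refl[OF pr], rule cc_Zr[OF assms(2) pr assms(1)])
    have "cg r (of_nat n - of_nat l - 1) (-1/2 - of_nat l - 1)"
      by (rule cg_diff[OF pr], rule cg_diff[OF pr x], (rule cg_refl[OF pr], simp add: pr)+)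
    thus "cg r ((of_nat n - of_nat l - 1) gchoose j) ((-1/2 - of_nat l - 1) gchoose j)"
      by (rule cg_gchoose[OF pr]) (use j assms in auto)
  qed
  have "\<not> r dvd fact (Suc m)" using prime_dvd_fact_iff[OF pr, of "Suc m"] assms by simp
  from cg_div_nat[OF pr cg_mult[OF pr c1 c2] this] show ?thesis unfolding Phi_def .
qed

lemma Phi0_cg: "cg r (Phi0 l (of_nat n)) (Phi0 l (-1/2))"
  unfolding Phi0_def
  by (rule cg_uminus[OF pr], rule cg_prod[OF pr], rule cg_diff[OF pr half_cg], rule cg_refl[OF pr], rule Zr_of_nat[OF pr])

end

lemma Phi_Zr:
  assumes p: "prime p" "Suc (Suc m) \<le> p" and m: "1 \<le> m"
  shows "Phi l m (-1/2) \<in> Zr p"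
proof -
  have p2: "\<not> int p dvd 2"
  proof
    assume "int p dvd 2"
    hence "p dvd 2" by presburger
    hence "p \<le> 2" by (auto dest: dvd_imp_le)
    thus False using p m by linarith
  qed
  have h: "(-1/2 :: rat) \<in> Zr p" using Zr_uminus[OF p(1) Zr_inv_int[OF p(1) p2]] by simp
  have "cg p (Phi l m (-1/2)) (Phi l m (-1/2))"
  proof -
    have c1: "cg p ((-1) ^ (m + 1) * (\<Prod>i<Suc l. -1/2 - of_nat i)) ((-1) ^ (m + 1) * (\<Prod>i<Suc l. -1/2 - of_nat i))"
      by (rule cg_refl[OF p(1)]) (intro Zr_mult[OF p(1)] Zr_power[OF p(1)] Zr_uminus[OF p(1)] Zr_1[OF p(1)] Zr_prod[OF p(1)] Zr_diff[OF p(1)] h Zr_of_nat[OF p(1)])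
    have c2: "cg p (\<Sum>j<m. cc m j * ((-1/2 - of_nat l - 1) gchoose j)) (\<Sum>j<m. cc m j * ((-1/2 - of_nat l - 1) gchoose j))"
    proof (rule cg_sum[OF p(1)], rule cg_mult[OF p(1)])
      fix j assume j: "j \<in> {..<m}"
      show "cg p (cc m j) (cc m j)" by (rule cg_refl[OF p(1)], rule cc_Zr[OF m p])
      have "cg p (-1/2 - of_nat l - 1) (-1/2 - of_nat l - 1)"
        by (rule cg_refl[OF p(1)]) (intro Zr_diff[OF p(1)] h Zr_of_nat[OF p(1)] Zr_1[OF p(1)])
      thus "cg p ((-1/2 - of_nat l - 1) gchoose j) ((-1/2 - of_nat l - 1) gchoose j)"
        by (rule cg_gchoose[OF p(1)]) (use j p in auto)
    qed
    have "\<not> p dvd fact (Suc m)" using prime_dvd_fact_iff[OF p(1), of "Suc m"] p by simp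
    from cg_div_nat[OF p(1) cg_mult[OF p(1) c1 c2] this] show ?thesis unfolding Phi_def .
  qed
  thus ?thesis unfolding cg_def by blast
qed

lemma Zr_all_Zloc:
  assumes m: "1 \<le> m" and c: "\<And>p. prime p \<Longrightarrow> Suc (Suc m) \<le> p \<Longrightarrow> c \<in> Zr p"
  shows "c \<in> adjoin_half (Zloc (m + 2))"
proof -
  have "c \<in> Zloc (m + 2)"
  proof -
    have "p < m + 2" if "prime p" "int p dvd snd (quotient_of c)" for p
    proof (rule ccontr)
      assume "\<not> p < m + 2"
      hence "c \<in> Zr p" using c that(1) by simp
      hence "r_integral p c" using r_integral_iff[OF that(1)] by blast
      thus False using that(2) unfolding r_integral_def by blast
    qed
    thus ?thesis unfolding Zloc_def using m by auto
  qed
  moreover have "c = c / 2 ^ 0" by simp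
  ultimately show ?thesis unfolding adjoin_half_def by blast
qed

lemma Phi0_Zloc: "Phi0 l (-1/2) \<in> adjoin_half (Zloc (0 + 2))"
proof -
  define z where "z = - (\<Prod>i<l. (-1 - 2 * int i))"
  have "(\<Prod>i<l. (-1/2 :: rat) - of_nat i) = (\<Prod>i<l. of_int (-1 - 2 * int i) / 2)"
    by (rule prod.cong) (simp_all add: field_simps)
  also have "\<dots> = (\<Prod>i<l. of_int (-1 - 2 * int i)) / (\<Prod>i<l. (2::rat))"
    by (rule prod_dividef)
  also have "(\<Prod>i<l. (2::rat)) = 2 ^ l" by simp
  finally have "Phi0 l (-1/2) = of_int z / 2 ^ l" unfolding Phi0_def z_def by (simp add: of_int_prod)
  moreover have "(of_int z :: rat) \<in> Zloc (0 + 2)" unfolding Zloc_def by simp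
  ultimately show ?thesis unfolding adjoin_half_def by blast
qed

theorem lemma2p4:
  fixes l m :: nat
  shows "fermat_function (H l m) \<and> fermat_residue (H l m) \<in> adjoin_half (Zloc (m + 2))"
proof -
  define c where "c = (if m = 0 then Phi0 l (-1/2) else Phi l m (-1/2))"
  have res: "has_fermat_residue (H l m) c"
    unfolding has_fermat_residue_def
  proof (intro exI[of _ "2 * l + 2 * m + 5"] allI impI)
    fix r assume r: "prime r \<and> 2 * l + 2 * m + 5 \<le> r"
    hence pr: "prime r" by blast
    have "odd r" using r by (intro prime_odd_nat) auto
    define n where "n = (r - 1) div 2"
    have rn: "r = 2 * n + 1" unfolding n_def using \<open>odd r\<close> by presburger
    have ln: "Suc l \<le> n" using r rn by linarith
    have "cg r (H l m r) c"
    proof (cases "m = 0")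
      case True
      thus ?thesis unfolding c_def using H0_eq[OF n_def] ln Phi0_cg[OF pr rn] by simp
    next
      case False
      hence m1: "1 \<le> m" by simp
      have "Suc (Suc m) \<le> r" using r by linarith
      thus ?thesis unfolding c_def using H_eq[OF m1 n_def ln] Phi_cg[OF pr rn _ m1] False by simp
    qed
    thus "cong_rat r (H l m r) c" using cong_rat_iff[OF pr] by blast
  qed
  have "fermat_residue (H l m) = c"
    unfolding fermat_residue_def using res residue_unique by blast
  moreover have "c \<in> adjoin_half (Zloc (m + 2))"
  proof (cases "m = 0")
    case True thus ?thesis unfolding c_def using Phi0_Zloc by simp
  next
    case False
    hence m1: "1 \<le> m" by simp
    show ?thesis unfolding c_def using False Zr_all_Zloc[OF m1] Phi_Zr[OF _ _ m1] by simp
  qed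
  ultimately show ?thesis using res unfolding fermat_function_def by auto
qed


end
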